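(* Let $C=(1,c_2,\dots,c_n)$ be a canonical system. Then for each $1\le i\le n$, the subsystem $(1,c_2,\dots,c_i)$ is tight.
   Context: A system is a tuple $C=(c_1,\dots,c_n)$ of integers with $1=c_1<c_2<\dots<c_n$; for $k\le n$, $(c_1,\dots,c_k)$ is a subsystem. For a positive integer $v$, $\mathrm{opt}_C(v)$ is the minimum of $\sum_i x_i$ over $x\in\mathbb{Z}_{\ge0}^n$ with $\sum_i c_ix_i=v$. The greedy representation of $v$ is produced by: for $i=n$ down to $1$, while $c_i\le$ remaining value, take a coin $c_i$. $\mathrm{grd}_C(v)$ is its number of coins. A positive integer $w$ is a counterexample if $\mathrm{opt}_C(w)<\mathrm{grd}_C(w)$; $C$ is canonical if it has none, noncanonical otherwise. A system $(c_1,\dots,c_k)$ is tight if it has no counterexample smaller than $c_k$. *)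

theory Defs
  imports Main
begin

text \<open>A coin system is a nonempty strictly increasing list of positive integers
starting with 1; element cs!(i-1) is the coin c_i.\<close>

definition coin_system :: "nat list \<Rightarrow> bool" where
  "coin_system cs \<longleftrightarrow> cs \<noteq> [] \<and> hd cs = 1 \<and> sorted_wrt (<) cs"

definition opt :: "nat list \<Rightarrow> nat \<Rightarrow> nat" where
  "opt cs v = (LEAST k. \<exists>x :: nat \<Rightarrow> nat.
      (\<Sum>i<length cs. cs ! i * x i) = v \<and> (\<Sum>i<length cs. x i) = k)"

text \<open>Greedy algorithm, coins processed from largest to smallest: for coin c,
taking c while c <= remaining value takes exactly (remaining div c) coins.\<close>
fun grd_aux :: "nat list \<Rightarrow> nat \<Rightarrow> nat" where
  "grd_aux [] v = 0"
| "grd_aux (c # cs) v = v div c + grd_aux cs (v mod c)"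

definition grd :: "nat list \<Rightarrow> nat \<Rightarrow> nat" where
  "grd cs v = grd_aux (rev cs) v"

definition counterexample :: "nat list \<Rightarrow> nat \<Rightarrow> bool" where
  "counterexample cs w \<longleftrightarrow> 0 < w \<and> opt cs w < grd cs w"

definition canonical :: "nat list \<Rightarrow> bool" where
  "canonical cs \<longleftrightarrow> (\<forall>w. \<not> counterexample cs w)"

definition tight :: "nat list \<Rightarrow> bool" where
  "tight cs \<longleftrightarrow> (\<forall>w. w < last cs \<longrightarrow> \<not> counterexample cs w)"

end

theory Submission
  imports Defs
begin

lemma grd_aux_app: "\<forall>c\<in>set xs. v < c \<Longrightarrow> grd_aux (xs @ ys) v = grd_aux ys v"
  by (induction xs) auto

lemma opt_attained:
  assumes "cs \<noteq> []" "hd cs = 1"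
  shows "\<exists>x. (\<Sum>i<length cs. cs ! i * x i) = v \<and> (\<Sum>i<length cs. x i) = opt cs v"
proof -
  have "\<exists>k x. (\<Sum>i<length cs. cs ! i * x i) = v \<and> (\<Sum>i<length cs. x i) = k"
  proof (intro exI conjI)
    have "cs ! 0 = 1" using assms by (simp add: hd_conv_nth)
    have "(\<Sum>i<length cs. cs ! i * (if i = 0 then v else 0)) = (\<Sum>i<length cs. if i = 0 then cs ! 0 * v else 0)"
      by (rule sum.cong) auto
    also have "\<dots> = v" using assms \<open>cs ! 0 = 1\<close> by simp
    finally show "(\<Sum>i<length cs. cs ! i * (if i = 0 then v else 0)) = v" .
    show "(\<Sum>i<length cs. (if i = 0 then v else 0)) = (\<Sum>i<length cs. (if i = 0 then v else 0))" ..
  qed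
  then show ?thesis unfolding opt_def by (rule LeastI_ex)
qed

theorem lemma1:
  assumes "coin_system cs" and "canonical cs"
  shows "\<forall>i. 1 \<le> i \<and> i \<le> length cs \<longrightarrow> tight (take i cs)"
proof (intro allI impI)
  fix i assume i: "1 \<le> i \<and> i \<le> length cs"
  let ?D = "take i cs"
  have ne: "?D \<noteq> []" using i by auto
  have hd: "hd ?D = 1" using assms(1) i unfolding coin_system_def by (simp add: hd_take)
  have sw: "sorted_wrt (<) cs" using assms(1) unfolding coin_system_def by simp
  have lastD: "last ?D = cs ! (i - 1)" using i ne by (simp add: last_conv_nth)
  have lenD: "length ?D = i" using i by simp
  show "tight ?D" unfolding tight_def
  proof (intro allI impI)
    fix w assume w: "w < last ?D"
    have big: "\<forall>c\<in>set (rev (drop i cs)). w < c"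
    proof
      fix c assume "c \<in> set (rev (drop i cs))"
      then obtain k where k: "k < length cs - i" "c = cs ! (i + k)"
        by (auto simp: in_set_conv_nth)
      have "cs ! (i - 1) < cs ! (i + k)"
        using sw k i unfolding sorted_wrt_iff_nth_less
        by (metis add_less_cancel_left diff_less less_add_same_cancel1 less_le_trans zero_less_one le_add1 less_diff_conv add.commute)
      then show "w < c" using w lastD k by simp
    qed
    have g: "grd cs w = grd ?D w"
    proof -
      have "rev cs = rev (drop i cs) @ rev ?D"
        by (metis append_take_drop_id rev_append)
      then show ?thesis unfolding grd_def using grd_aux_app[OF big] by simp
    qed
    obtain x where x: "(\<Sum>j<i. ?D ! j * x j) = w" "(\<Sum>j<i. x j) = opt ?D w"
      using opt_attained[OF ne hd, of w] lenD by auto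
    define y where "y j = (if j < i then x j else 0)" for j
    have s1: "(\<Sum>j<length cs. cs ! j * y j) = w"
    proof -
      have "(\<Sum>j<length cs. cs ! j * y j) = (\<Sum>j<i. cs ! j * y j)"
        by (rule sum.mono_neutral_right) (use i in \<open>auto simp: y_def\<close>)
      also have "\<dots> = (\<Sum>j<i. ?D ! j * x j)"
        by (rule sum.cong) (auto simp: y_def)
      finally show ?thesis using x by simp
    qed
    have s2: "(\<Sum>j<length cs. y j) = opt ?D w"
    proof -
      have "(\<Sum>j<length cs. y j) = (\<Sum>j<i. y j)"
        by (rule sum.mono_neutral_right) (use i in \<open>auto simp: y_def\<close>)
      also have "\<dots> = (\<Sum>j<i. x j)"
        by (rule sum.cong) (auto simp: y_def)
      finally show ?thesis using x by simp
    qed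
    have "opt cs w \<le> opt ?D w"
      unfolding opt_def[of cs] using s1 s2 by (intro Least_le) blast
    moreover have "\<not> counterexample cs w" using assms(2) unfolding canonical_def by simp
    ultimately show "\<not> counterexample ?D w"
      unfolding counterexample_def using g by auto
  qed
qed

end
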